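(* Let $N$ be a strictly reflexive object of a compact closed category $(\mathcal C,\otimes,I)$ with trivial scalars, so that $N^*\otimes N=N$ and $N\otimes N=N$, and let $\Delta,\nabla\in\mathcal C(N,N)$ be the split and merge arrows of the standard Frobenius algebra at $N=N^*\otimes N$. Then (1) $\nabla\Delta=1_N$; (2) $\Delta\nabla=1_N$ if and only if $N$ is a unit object of the one-object semi-monoidal category $(\mathcal C(N,N),\otimes)$.
   Context: Strictly reflexive: $[N\to N]=N^*\otimes N=N$ with $\mathrm{app},\mathrm{lam}$ identity arrows (and then also $N^*=N$, $N\otimes N=N$). Trivial scalars: $\mathcal C(I,I)=\{1_I\}$. The standard Frobenius algebra at $X^*\otimes X$: split $\Delta=(1_{X^*}\otimes\eta_X\otimes1_X)\circ(X^*\otimes X\cong X^*\otimes I\otimes X)$, merge $\nabla=(X^*\otimes I\otimes X\cong X^*\otimes X)\circ(1_{X^*}\otimes\epsilon_{X^*}\otimes1_X)$, here with $X=N$. A (Saavedra) unit object of a semi-monoidal category is an object $U$ with $U\cong U\otimes U$ such that $U\otimes(-)$ and $(-)\otimes U$ are fully faithful; for the one-object category $(\mathcal C(N,N),\otimes)$ this means the maps $f\mapsto1_N\otimes f$ and $f\mapsto f\otimes1_N$ on $\mathcal C(N,N)$ are bijections. *)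

theory Defs
  imports Main
begin

text \<open>A category is given by a type of objects 'o and a type of arrows 'm
  (every element of 'm is an arrow), with domain/codomain maps, composition
  (comp g f = g after f, meaningful when cod f = dom g) and identities.\<close>

record ('o, 'm) cc =
  cdom   :: "'m \<Rightarrow> 'o"
  ccod   :: "'m \<Rightarrow> 'o"
  ccomp  :: "'m \<Rightarrow> 'm \<Rightarrow> 'm"
  cid    :: "'o \<Rightarrow> 'm"
  ctens  :: "'o \<Rightarrow> 'o \<Rightarrow> 'o"
  ctensA :: "'m \<Rightarrow> 'm \<Rightarrow> 'm"
  cunit  :: "'o"
  calpha  :: "'o \<Rightarrow> 'o \<Rightarrow> 'o \<Rightarrow> 'm"
  calphai :: "'o \<Rightarrow> 'o \<Rightarrow> 'o \<Rightarrow> 'm"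
  clam   :: "'o \<Rightarrow> 'm"
  clami  :: "'o \<Rightarrow> 'm"
  crho   :: "'o \<Rightarrow> 'm"
  crhoi  :: "'o \<Rightarrow> 'm"
  csym   :: "'o \<Rightarrow> 'o \<Rightarrow> 'm"
  cdual  :: "'o \<Rightarrow> 'o"
  ceta   :: "'o \<Rightarrow> 'm"
  ceps   :: "'o \<Rightarrow> 'm"

definition hom :: "('o, 'm) cc \<Rightarrow> 'o \<Rightarrow> 'o \<Rightarrow> 'm set" where
  "hom C A B = {f. cdom C f = A \<and> ccod C f = B}"

definition is_category :: "('o, 'm) cc \<Rightarrow> bool" where
  "is_category C \<longleftrightarrow>
     (\<forall>A. cid C A \<in> hom C A A) \<and>
     (\<forall>f g. ccod C f = cdom C g \<longrightarrow> ccomp C g f \<in> hom C (cdom C f) (ccod C g)) \<and>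
     (\<forall>f. ccomp C (cid C (ccod C f)) f = f \<and> ccomp C f (cid C (cdom C f)) = f) \<and>
     (\<forall>f g h. ccod C f = cdom C g \<and> ccod C g = cdom C h \<longrightarrow>
        ccomp C h (ccomp C g f) = ccomp C (ccomp C h g) f)"

definition is_monoidal :: "('o, 'm) cc \<Rightarrow> bool" where
  "is_monoidal C \<longleftrightarrow>
     is_category C \<and>
     \<comment> \<open>tensor is a bifunctor\<close>
     (\<forall>f g. ctensA C f g \<in> hom C (ctens C (cdom C f) (cdom C g)) (ctens C (ccod C f) (ccod C g))) \<and>
     (\<forall>A B. ctensA C (cid C A) (cid C B) = cid C (ctens C A B)) \<and>
     (\<forall>f g h k. ccod C f = cdom C g \<and> ccod C h = cdom C k \<longrightarrow>
        ctensA C (ccomp C g f) (ccomp C k h) = ccomp C (ctensA C g k) (ctensA C f h)) \<and>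
     \<comment> \<open>associator: natural isomorphism\<close>
     (\<forall>A B D. calpha C A B D \<in> hom C (ctens C (ctens C A B) D) (ctens C A (ctens C B D)) \<and>
              calphai C A B D \<in> hom C (ctens C A (ctens C B D)) (ctens C (ctens C A B) D) \<and>
              ccomp C (calphai C A B D) (calpha C A B D) = cid C (ctens C (ctens C A B) D) \<and>
              ccomp C (calpha C A B D) (calphai C A B D) = cid C (ctens C A (ctens C B D))) \<and>
     (\<forall>f g h. ccomp C (calpha C (ccod C f) (ccod C g) (ccod C h)) (ctensA C (ctensA C f g) h)
            = ccomp C (ctensA C f (ctensA C g h)) (calpha C (cdom C f) (cdom C g) (cdom C h))) \<and>
     \<comment> \<open>left unitor: natural isomorphism\<close>
     (\<forall>A. clam C A \<in> hom C (ctens C (cunit C) A) A \<and>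
          clami C A \<in> hom C A (ctens C (cunit C) A) \<and>
          ccomp C (clami C A) (clam C A) = cid C (ctens C (cunit C) A) \<and>
          ccomp C (clam C A) (clami C A) = cid C A) \<and>
     (\<forall>f. ccomp C (clam C (ccod C f)) (ctensA C (cid C (cunit C)) f) = ccomp C f (clam C (cdom C f))) \<and>
     \<comment> \<open>right unitor: natural isomorphism\<close>
     (\<forall>A. crho C A \<in> hom C (ctens C A (cunit C)) A \<and>
          crhoi C A \<in> hom C A (ctens C A (cunit C)) \<and>
          ccomp C (crhoi C A) (crho C A) = cid C (ctens C A (cunit C)) \<and>
          ccomp C (crho C A) (crhoi C A) = cid C A) \<and>
     (\<forall>f. ccomp C (crho C (ccod C f)) (ctensA C f (cid C (cunit C))) = ccomp C f (crho C (cdom C f))) \<and>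
     \<comment> \<open>pentagon\<close>
     (\<forall>A B D E.
        ccomp C (calpha C A B (ctens C D E)) (calpha C (ctens C A B) D E)
        = ccomp C (ctensA C (cid C A) (calpha C B D E))
            (ccomp C (calpha C A (ctens C B D) E) (ctensA C (calpha C A B D) (cid C E)))) \<and>
     \<comment> \<open>triangle\<close>
     (\<forall>A B. ccomp C (ctensA C (cid C A) (clam C B)) (calpha C A (cunit C) B)
            = ctensA C (crho C A) (cid C B))"

definition is_symmetric_monoidal :: "('o, 'm) cc \<Rightarrow> bool" where
  "is_symmetric_monoidal C \<longleftrightarrow>
     is_monoidal C \<and>
     (\<forall>A B. csym C A B \<in> hom C (ctens C A B) (ctens C B A) \<and>
            ccomp C (csym C B A) (csym C A B) = cid C (ctens C A B)) \<and>
     (\<forall>f g. ccomp C (csym C (ccod C f) (ccod C g)) (ctensA C f g)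
          = ccomp C (ctensA C g f) (csym C (cdom C f) (cdom C g))) \<and>
     \<comment> \<open>hexagon\<close>
     (\<forall>A B D.
        ccomp C (calpha C B D A) (ccomp C (csym C A (ctens C B D)) (calpha C A B D))
        = ccomp C (ctensA C (cid C B) (csym C A D))
            (ccomp C (calpha C B A D) (ctensA C (csym C A B) (cid C D))))"

definition is_compact_closed :: "('o, 'm) cc \<Rightarrow> bool" where
  "is_compact_closed C \<longleftrightarrow>
     is_symmetric_monoidal C \<and>
     (\<forall>A. ceta C A \<in> hom C (cunit C) (ctens C A (cdual C A)) \<and>
          ceps C A \<in> hom C (ctens C (cdual C A) A) (cunit C) \<and>
          ccomp C (crho C A)
            (ccomp C (ctensA C (cid C A) (ceps C A))
              (ccomp C (calpha C A (cdual C A) A)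
                (ccomp C (ctensA C (ceta C A) (cid C A)) (clami C A)))) = cid C A \<and>
          ccomp C (clam C (cdual C A))
            (ccomp C (ctensA C (ceps C A) (cid C (cdual C A)))
              (ccomp C (calphai C (cdual C A) A (cdual C A))
                (ccomp C (ctensA C (cid C (cdual C A)) (ceta C A)) (crhoi C (cdual C A)))))
          = cid C (cdual C A))"

text \<open>split: X*(x)X ~= X*(x)(I(x)X) --(1 (x) (eta_X (x) 1))--> X*(x)((X(x)X*)(x)X).
  merge: X*(x)((X(x)X*)(x)X) --(1 (x) (eps_{X*} (x) 1))--> X*(x)(I(x)X) ~= X*(x)X.
  (The merge is well-typed when X** = X, e.g. for X = N below where N* = N.)\<close>

definition frob_split :: "('o, 'm) cc \<Rightarrow> 'o \<Rightarrow> 'm" where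
  "frob_split C X =
     ccomp C (ctensA C (cid C (cdual C X)) (ctensA C (ceta C X) (cid C X)))
             (ctensA C (cid C (cdual C X)) (clami C X))"

definition frob_merge :: "('o, 'm) cc \<Rightarrow> 'o \<Rightarrow> 'm" where
  "frob_merge C X =
     ccomp C (ctensA C (cid C (cdual C X)) (clam C X))
             (ctensA C (cid C (cdual C X)) (ctensA C (ceps C (cdual C X)) (cid C X)))"

definition is_unit_object_endo :: "('o, 'm) cc \<Rightarrow> 'o \<Rightarrow> bool" where
  "is_unit_object_endo C N \<longleftrightarrow>
     bij_betw (\<lambda>f. ctensA C (cid C N) f) (hom C N N) (hom C N N) \<and>
     bij_betw (\<lambda>f. ctensA C f (cid C N)) (hom C N N) (hom C N N)"

end

theory Submission
  imports Defs
begin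

locale ccat =
  fixes C :: "('o, 'm) cc"
  assumes cc: "is_compact_closed C"
begin

abbreviation cmp (infixr "\<cdot>" 55) where "g \<cdot> f \<equiv> ccomp C g f"
abbreviation tA (infixr "\<box>" 60) where "f \<box> g \<equiv> ctensA C f g"
abbreviation T where "T \<equiv> ctens C"
abbreviation I where "I \<equiv> cunit C"
abbreviation dm where "dm \<equiv> cdom C"
abbreviation cd where "cd \<equiv> ccod C"
abbreviation one where "one \<equiv> cid C"

lemma mon: "is_monoidal C" and sm: "is_symmetric_monoidal C" and cat: "is_category C"
  using cc unfolding is_compact_closed_def is_symmetric_monoidal_def is_monoidal_def by auto

lemma id_ty[simp]: "dm (one A) = A" "cd (one A) = A"
  using cat unfolding is_category_def hom_def by auto

lemma comp_ty[simp]: "cd f = dm g \<Longrightarrow> dm (g \<cdot> f) = dm f"  "cd f = dm g \<Longrightarrow> cd (g \<cdot> f) = cd g"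
  using cat unfolding is_category_def hom_def by auto

lemma idl: "cd f = A \<Longrightarrow> one A \<cdot> f = f" and idr: "dm f = A \<Longrightarrow> f \<cdot> one A = f"
  using cat unfolding is_category_def by auto

lemma assoc: "cd f = dm g \<Longrightarrow> cd g = dm h \<Longrightarrow> h \<cdot> (g \<cdot> f) = (h \<cdot> g) \<cdot> f"
  using cat unfolding is_category_def by auto

lemma tens_ty[simp]: "dm (f \<box> g) = T (dm f) (dm g)" "cd (f \<box> g) = T (cd f) (cd g)"
  using mon unfolding is_monoidal_def hom_def by auto

lemma tens_id: "one A \<box> one B = one (T A B)"
  using mon unfolding is_monoidal_def by auto

lemma interchange: "cd f = dm g \<Longrightarrow> cd h = dm k \<Longrightarrow> (g \<cdot> f) \<box> (k \<cdot> h) = (g \<box> k) \<cdot> (f \<box> h)"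
  using mon unfolding is_monoidal_def by auto

lemma alpha_ty[simp]:
  "dm (calpha C A B D) = T (T A B) D" "cd (calpha C A B D) = T A (T B D)"
  "dm (calphai C A B D) = T A (T B D)" "cd (calphai C A B D) = T (T A B) D"
  using mon unfolding is_monoidal_def hom_def by auto

lemma alpha_inv: "calphai C A B D \<cdot> calpha C A B D = one (T (T A B) D)"
  "calpha C A B D \<cdot> calphai C A B D = one (T A (T B D))"
  using mon unfolding is_monoidal_def by auto

lemma alpha_nat: "calpha C (cd f) (cd g) (cd h) \<cdot> ((f \<box> g) \<box> h) = (f \<box> (g \<box> h)) \<cdot> calpha C (dm f) (dm g) (dm h)"
  using mon unfolding is_monoidal_def by auto

lemma lam_ty[simp]:
  "dm (clam C A) = T I A" "cd (clam C A) = A" "dm (clami C A) = A" "cd (clami C A) = T I A"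
  using mon unfolding is_monoidal_def hom_def by auto

lemma lam_inv: "clami C A \<cdot> clam C A = one (T I A)" "clam C A \<cdot> clami C A = one A"
  using mon unfolding is_monoidal_def by auto

lemma lam_nat: "clam C (cd f) \<cdot> (one I \<box> f) = f \<cdot> clam C (dm f)"
  using mon unfolding is_monoidal_def by auto

lemma rho_ty[simp]:
  "dm (crho C A) = T A I" "cd (crho C A) = A" "dm (crhoi C A) = A" "cd (crhoi C A) = T A I"
  using mon unfolding is_monoidal_def hom_def by auto

lemma rho_inv: "crhoi C A \<cdot> crho C A = one (T A I)" "crho C A \<cdot> crhoi C A = one A"
  using mon unfolding is_monoidal_def by auto

lemma rho_nat: "crho C (cd f) \<cdot> (f \<box> one I) = f \<cdot> crho C (dm f)"
  using mon unfolding is_monoidal_def by auto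

lemma sym_ty[simp]: "dm (csym C A B) = T A B" "cd (csym C A B) = T B A"
  using sm unfolding is_symmetric_monoidal_def hom_def by auto

lemma sym_inv: "csym C B A \<cdot> csym C A B = one (T A B)"
  using sm unfolding is_symmetric_monoidal_def by auto

lemma sym_nat: "csym C (cd f) (cd g) \<cdot> (f \<box> g) = (g \<box> f) \<cdot> csym C (dm f) (dm g)"
  using sm unfolding is_symmetric_monoidal_def by auto

lemma eta_ty[simp]: "dm (ceta C A) = I" "cd (ceta C A) = T A (cdual C A)"
  "dm (ceps C A) = T (cdual C A) A" "cd (ceps C A) = I"
  using cc unfolding is_compact_closed_def hom_def by auto

definition Kl where
  "Kl X A B k = clam C B \<cdot> ((ceps C X \<box> one B) \<cdot> (calphai C (cdual C X) X B \<cdot>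
     ((one (cdual C X) \<box> k) \<cdot> (calpha C (cdual C X) X A \<cdot>
     (((csym C X (cdual C X) \<cdot> ceta C X) \<box> one A) \<cdot> clami C A)))))"

lemma Kl_cancel:
  assumes scal: "hom C I I = {one I}"
  shows "Kl X (dm g) (cd g) (one X \<box> g) = g"
proof -
  define D where "D = cdual C X"
  define A where "A = dm g"
  define B where "B = cd g"
  define e' where "e' = csym C X D \<cdot> ceta C X"
  have e'ty[simp]: "dm e' = I" "cd e' = T D X" unfolding e'_def D_def by auto
  define R where "R = (e' \<box> one A) \<cdot> clami C A"
  have Rty[simp]: "cd R = T (T D X) A" "dm R = A" unfolding R_def by auto
  have an: "calpha C D X B \<cdot> ((one D \<box> one X) \<box> g) = (one D \<box> (one X \<box> g)) \<cdot> calpha C D X A"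
    using alpha_nat[of "one D" "one X" g] by (simp add: A_def B_def)
  have h1: "calphai C D X B \<cdot> ((one D \<box> (one X \<box> g)) \<cdot> (calpha C D X A \<cdot> R)) = (one (T D X) \<box> g) \<cdot> R"
  proof -
    have "(one D \<box> (one X \<box> g)) \<cdot> (calpha C D X A \<cdot> R) = ((one D \<box> (one X \<box> g)) \<cdot> calpha C D X A) \<cdot> R"
      by (rule assoc) (auto simp: A_def)
    also have "\<dots> = (calpha C D X B \<cdot> ((one D \<box> one X) \<box> g)) \<cdot> R" using an by simp
    also have "\<dots> = calpha C D X B \<cdot> (((one D \<box> one X) \<box> g) \<cdot> R)"
      by (rule assoc[symmetric]) (auto simp: A_def B_def)
    finally have "calphai C D X B \<cdot> ((one D \<box> (one X \<box> g)) \<cdot> (calpha C D X A \<cdot> R)) =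
       calphai C D X B \<cdot> (calpha C D X B \<cdot> (((one D \<box> one X) \<box> g) \<cdot> R))" by simp
    also have "\<dots> = (calphai C D X B \<cdot> calpha C D X B) \<cdot> (((one D \<box> one X) \<box> g) \<cdot> R)"
      by (rule assoc) (auto simp: A_def B_def)
    also have "\<dots> = ((one D \<box> one X) \<box> g) \<cdot> R"
      by (simp add: alpha_inv idl A_def B_def)
    finally show ?thesis by (simp add: tens_id)
  qed
  have h2: "(one (T D X) \<box> g) \<cdot> R = (e' \<box> g) \<cdot> clami C A"
  proof -
    have "(one (T D X) \<box> g) \<cdot> R = ((one (T D X) \<box> g) \<cdot> (e' \<box> one A)) \<cdot> clami C A"
      unfolding R_def by (rule assoc) (auto simp: A_def)
    also have "(one (T D X) \<box> g) \<cdot> (e' \<box> one A) = (one (T D X) \<cdot> e') \<box> (g \<cdot> one A)"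
      by (rule interchange[symmetric]) (auto simp: A_def)
    also have "\<dots> = e' \<box> g" by (simp add: idl idr A_def)
    finally show ?thesis .
  qed
  have eD: "dm (ceps C X) = T D X" "cd (ceps C X) = I" by (auto simp: D_def)
  have sc: "ceps C X \<cdot> e' = one I"
  proof -
    have "ceps C X \<cdot> e' \<in> hom C I I" unfolding hom_def using eD by auto
    with scal show ?thesis by auto
  qed
  have h3: "(ceps C X \<box> one B) \<cdot> ((e' \<box> g) \<cdot> clami C A) = (one I \<box> g) \<cdot> clami C A"
  proof -
    have "(ceps C X \<box> one B) \<cdot> ((e' \<box> g) \<cdot> clami C A) = ((ceps C X \<box> one B) \<cdot> (e' \<box> g)) \<cdot> clami C A"
      by (rule assoc) (auto simp: A_def B_def D_def)
    also have "(ceps C X \<box> one B) \<cdot> (e' \<box> g) = (ceps C X \<cdot> e') \<box> (one B \<cdot> g)"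
      by (rule interchange[symmetric]) (auto simp: B_def D_def)
    also have "\<dots> = one I \<box> g" by (simp add: sc idl B_def)
    finally show ?thesis .
  qed
  have h4: "clam C B \<cdot> ((one I \<box> g) \<cdot> clami C A) = g"
  proof -
    have "clam C B \<cdot> ((one I \<box> g) \<cdot> clami C A) = (clam C B \<cdot> (one I \<box> g)) \<cdot> clami C A"
      by (rule assoc) (auto simp: A_def B_def)
    also have "clam C B \<cdot> (one I \<box> g) = g \<cdot> clam C A" using lam_nat[of g] by (simp add: A_def B_def)
    also have "(g \<cdot> clam C A) \<cdot> clami C A = g \<cdot> (clam C A \<cdot> clami C A)"
      by (rule assoc[symmetric]) (auto simp: A_def)
    also have "\<dots> = g" by (simp add: lam_inv idr A_def)
    finally show ?thesis .
  qed
  show ?thesis unfolding Kl_def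
    using h1 h2 h3 h4 by (simp add: D_def[symmetric] e'_def[symmetric] R_def[symmetric] A_def[symmetric] B_def[symmetric])
qed

lemma left_cancel:
  assumes "hom C I I = {one I}" "one X \<box> g = one X \<box> h" "dm g = dm h" "cd g = cd h"
  shows "g = h"
  using Kl_cancel[OF assms(1), of X g] Kl_cancel[OF assms(1), of X h] assms(2-4) by metis

lemma right_cancel:
  assumes s: "hom C I I = {one I}" and e: "g \<box> one X = h \<box> one X" and d: "dm g = dm h" and c: "cd g = cd h"
  shows "g = h"
proof -
  have sw: "one X \<box> f = csym C (cd f) X \<cdot> ((f \<box> one X) \<cdot> csym C X (dm f))" for f
  proof -
    have "csym C (cd f) X \<cdot> ((f \<box> one X) \<cdot> csym C X (dm f)) = (csym C (cd f) X \<cdot> (f \<box> one X)) \<cdot> csym C X (dm f)"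
      by (rule assoc) auto
    also have "csym C (cd f) X \<cdot> (f \<box> one X) = (one X \<box> f) \<cdot> csym C (dm f) X"
      using sym_nat[of f "one X"] by simp
    also have "\<dots> \<cdot> csym C X (dm f) = (one X \<box> f) \<cdot> (csym C (dm f) X \<cdot> csym C X (dm f))"
      by (rule assoc[symmetric]) auto
    also have "\<dots> = one X \<box> f" by (simp add: sym_inv idr)
    finally show ?thesis by simp
  qed
  have "one X \<box> g = one X \<box> h" using sw[of g] sw[of h] e d c by metis
  thus ?thesis using left_cancel[OF s _ d c] by blast
qed

lemma conjL:
  assumes f: "dm f = X" "cd f = X" and t: "dm u = I" "cd v = I"
  shows "((u \<box> one X) \<cdot> clami C X) \<cdot> (f \<cdot> (clam C X \<cdot> (v \<box> one X))) = (u \<cdot> v) \<box> f"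
proof -
  have "f \<cdot> (clam C X \<cdot> (v \<box> one X)) = (f \<cdot> clam C X) \<cdot> (v \<box> one X)"
    by (rule assoc) (auto simp: f t)
  also have "f \<cdot> clam C X = clam C X \<cdot> (one I \<box> f)" using lam_nat[of f] f by simp
  also have "(clam C X \<cdot> (one I \<box> f)) \<cdot> (v \<box> one X) = clam C X \<cdot> ((one I \<box> f) \<cdot> (v \<box> one X))"
    by (rule assoc[symmetric]) (auto simp: f t)
  also have "(one I \<box> f) \<cdot> (v \<box> one X) = (one I \<cdot> v) \<box> (f \<cdot> one X)"
    by (rule interchange[symmetric]) (auto simp: f t)
  also have "\<dots> = v \<box> f" using f t by (simp add: idl idr)
  finally have 1: "f \<cdot> (clam C X \<cdot> (v \<box> one X)) = clam C X \<cdot> (v \<box> f)" .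
  have "((u \<box> one X) \<cdot> clami C X) \<cdot> (clam C X \<cdot> (v \<box> f)) = (u \<box> one X) \<cdot> (clami C X \<cdot> (clam C X \<cdot> (v \<box> f)))"
    by (rule assoc[symmetric]) (auto simp: f t)
  also have "clami C X \<cdot> (clam C X \<cdot> (v \<box> f)) = (clami C X \<cdot> clam C X) \<cdot> (v \<box> f)"
    by (rule assoc) (auto simp: f t)
  also have "\<dots> = v \<box> f" using f t by (simp add: lam_inv idl)
  also have "(u \<box> one X) \<cdot> (v \<box> f) = (u \<cdot> v) \<box> (one X \<cdot> f)"
    by (rule interchange[symmetric]) (auto simp: f t)
  also have "\<dots> = (u \<cdot> v) \<box> f" using f by (simp add: idl)
  finally show ?thesis using 1 by simp
qed

lemma conjR:
  assumes f: "dm f = X" "cd f = X" and t: "dm u = I" "cd v = I"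
  shows "((one X \<box> u) \<cdot> crhoi C X) \<cdot> (f \<cdot> (crho C X \<cdot> (one X \<box> v))) = f \<box> (u \<cdot> v)"
proof -
  have "f \<cdot> (crho C X \<cdot> (one X \<box> v)) = (f \<cdot> crho C X) \<cdot> (one X \<box> v)"
    by (rule assoc) (auto simp: f t)
  also have "f \<cdot> crho C X = crho C X \<cdot> (f \<box> one I)" using rho_nat[of f] f by simp
  also have "(crho C X \<cdot> (f \<box> one I)) \<cdot> (one X \<box> v) = crho C X \<cdot> ((f \<box> one I) \<cdot> (one X \<box> v))"
    by (rule assoc[symmetric]) (auto simp: f t)
  also have "(f \<box> one I) \<cdot> (one X \<box> v) = (f \<cdot> one X) \<box> (one I \<cdot> v)"
    by (rule interchange[symmetric]) (auto simp: f t)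
  also have "\<dots> = f \<box> v" using f t by (simp add: idl idr)
  finally have 1: "f \<cdot> (crho C X \<cdot> (one X \<box> v)) = crho C X \<cdot> (f \<box> v)" .
  have "((one X \<box> u) \<cdot> crhoi C X) \<cdot> (crho C X \<cdot> (f \<box> v)) = (one X \<box> u) \<cdot> (crhoi C X \<cdot> (crho C X \<cdot> (f \<box> v)))"
    by (rule assoc[symmetric]) (auto simp: f t)
  also have "crhoi C X \<cdot> (crho C X \<cdot> (f \<box> v)) = (crhoi C X \<cdot> crho C X) \<cdot> (f \<box> v)"
    by (rule assoc) (auto simp: f t)
  also have "\<dots> = f \<box> v" using f t by (simp add: rho_inv idl)
  also have "(one X \<box> u) \<cdot> (f \<box> v) = (one X \<cdot> f) \<box> (u \<cdot> v)"
    by (rule interchange[symmetric]) (auto simp: f t)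
  also have "\<dots> = f \<box> (u \<cdot> v)" using f by (simp add: idl)
  finally show ?thesis using 1 by simp
qed

lemma baL:
  assumes t: "dm u = I" "cd v = I" "cd u = dm v" and s: "v \<cdot> u = one I"
  shows "(clam C X \<cdot> (v \<box> one X)) \<cdot> ((u \<box> one X) \<cdot> clami C X) = one X"
proof -
  have "(clam C X \<cdot> (v \<box> one X)) \<cdot> ((u \<box> one X) \<cdot> clami C X) = clam C X \<cdot> ((v \<box> one X) \<cdot> ((u \<box> one X) \<cdot> clami C X))"
    by (rule assoc[symmetric]) (auto simp: t)
  also have "(v \<box> one X) \<cdot> ((u \<box> one X) \<cdot> clami C X) = ((v \<box> one X) \<cdot> (u \<box> one X)) \<cdot> clami C X"
    by (rule assoc) (auto simp: t)
  also have "(v \<box> one X) \<cdot> (u \<box> one X) = (v \<cdot> u) \<box> (one X \<cdot> one X)"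
    by (rule interchange[symmetric]) (auto simp: t)
  also have "\<dots> = one (T I X)" by (simp add: s idl tens_id)
  also have "one (T I X) \<cdot> clami C X = clami C X" by (simp add: idl)
  finally show ?thesis by (simp add: lam_inv)
qed

lemma baR:
  assumes t: "dm u = I" "cd v = I" "cd u = dm v" and s: "v \<cdot> u = one I"
  shows "(crho C X \<cdot> (one X \<box> v)) \<cdot> ((one X \<box> u) \<cdot> crhoi C X) = one X"
proof -
  have "(crho C X \<cdot> (one X \<box> v)) \<cdot> ((one X \<box> u) \<cdot> crhoi C X) = crho C X \<cdot> ((one X \<box> v) \<cdot> ((one X \<box> u) \<cdot> crhoi C X))"
    by (rule assoc[symmetric]) (auto simp: t)
  also have "(one X \<box> v) \<cdot> ((one X \<box> u) \<cdot> crhoi C X) = ((one X \<box> v) \<cdot> (one X \<box> u)) \<cdot> crhoi C X"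
    by (rule assoc) (auto simp: t)
  also have "(one X \<box> v) \<cdot> (one X \<box> u) = (one X \<cdot> one X) \<box> (v \<cdot> u)"
    by (rule interchange[symmetric]) (auto simp: t)
  also have "\<dots> = one (T X I)" by (simp add: s idl tens_id)
  also have "one (T X I) \<cdot> crhoi C X = crhoi C X" by (simp add: idl)
  finally show ?thesis by (simp add: rho_inv)
qed

lemma conj_bij:
  assumes ty: "dm a = N" "cd a = N" "dm b = N" "cd b = N"
    and ba: "b \<cdot> a = one N" and ab: "a \<cdot> b = one N"
    and F: "\<And>f. f \<in> hom C N N \<Longrightarrow> F f = a \<cdot> (f \<cdot> b)"
  shows "bij_betw F (hom C N N) (hom C N N)"
proof (rule bij_betw_byWitness[where f' = "\<lambda>h. b \<cdot> (h \<cdot> a)"])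
  have key: "p \<cdot> (q \<cdot> (f \<cdot> (q' \<cdot> p'))) = (p \<cdot> q) \<cdot> (f \<cdot> (q' \<cdot> p'))" if
    "dm f = N" "cd f = N" "dm p = N" "cd p = N" "dm q = N" "cd q = N" "dm p' = N" "cd p' = N" "dm q' = N" "cd q' = N"
    "p \<cdot> q = one N" "q' \<cdot> p' = one N" for f p q p' q'
    using that by (simp add: assoc)
  have k2: "(p \<cdot> q) \<cdot> (f \<cdot> (q' \<cdot> p')) = f" if
    "dm f = N" "cd f = N" "p \<cdot> q = one N" "q' \<cdot> p' = one N" for f p q p' q'
    using that by (simp add: idl idr)
  show "\<forall>x\<in>hom C N N. b \<cdot> (F x \<cdot> a) = x"
  proof
    fix x assume x: "x \<in> hom C N N"
    hence xt: "dm x = N" "cd x = N" by (auto simp: hom_def)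
    have "b \<cdot> (F x \<cdot> a) = b \<cdot> ((a \<cdot> (x \<cdot> b)) \<cdot> a)" using F x by simp
    also have "(a \<cdot> (x \<cdot> b)) \<cdot> a = a \<cdot> (x \<cdot> (b \<cdot> a))" using xt ty by (simp add: assoc)
    also have "b \<cdot> (a \<cdot> (x \<cdot> (b \<cdot> a))) = (b \<cdot> a) \<cdot> (x \<cdot> (b \<cdot> a))" using xt ty by (simp add: assoc)
    also have "\<dots> = x" using xt ba by (simp add: idl idr)
    finally show "b \<cdot> (F x \<cdot> a) = x" .
  qed
  show "\<forall>x\<in>hom C N N. F (b \<cdot> (x \<cdot> a)) = x"
  proof
    fix x assume x: "x \<in> hom C N N"
    hence xt: "dm x = N" "cd x = N" by (auto simp: hom_def)
    have "b \<cdot> (x \<cdot> a) \<in> hom C N N" using xt ty by (simp add: hom_def)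
    hence "F (b \<cdot> (x \<cdot> a)) = a \<cdot> ((b \<cdot> (x \<cdot> a)) \<cdot> b)" using F by simp
    also have "(b \<cdot> (x \<cdot> a)) \<cdot> b = b \<cdot> (x \<cdot> (a \<cdot> b))" using xt ty by (simp add: assoc)
    also have "a \<cdot> (b \<cdot> (x \<cdot> (a \<cdot> b))) = (a \<cdot> b) \<cdot> (x \<cdot> (a \<cdot> b))" using xt ty by (simp add: assoc)
    also have "\<dots> = x" using xt ab by (simp add: idl idr)
    finally show "F (b \<cdot> (x \<cdot> a)) = x" .
  qed
  show "F ` hom C N N \<subseteq> hom C N N" using F ty by (auto simp: hom_def)
  show "(\<lambda>h. b \<cdot> (h \<cdot> a)) ` hom C N N \<subseteq> hom C N N" using ty by (auto simp: hom_def)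
qed

lemma Kl_scalar:
  assumes scal: "hom C I I = {one I}" and g: "dm g = X" "cd g = X"
  shows "Kl X A A (g \<box> one A) = one A"
proof -
  define D where "D = cdual C X"
  define e' where "e' = csym C X D \<cdot> ceta C X"
  have e'ty[simp]: "dm e' = I" "cd e' = T D X" unfolding e'_def D_def by auto
  define R where "R = (e' \<box> one A) \<cdot> clami C A"
  have Rty[simp]: "cd R = T (T D X) A" "dm R = A" unfolding R_def by auto
  have an: "calpha C D X A \<cdot> ((one D \<box> g) \<box> one A) = (one D \<box> (g \<box> one A)) \<cdot> calpha C D X A"
    using alpha_nat[of "one D" g "one A"] by (simp add: g)
  have h1: "calphai C D X A \<cdot> ((one D \<box> (g \<box> one A)) \<cdot> (calpha C D X A \<cdot> R)) = ((one D \<box> g) \<box> one A) \<cdot> R"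
  proof -
    have "(one D \<box> (g \<box> one A)) \<cdot> (calpha C D X A \<cdot> R) = ((one D \<box> (g \<box> one A)) \<cdot> calpha C D X A) \<cdot> R"
      by (rule assoc) (auto simp: g)
    also have "\<dots> = (calpha C D X A \<cdot> ((one D \<box> g) \<box> one A)) \<cdot> R" using an by simp
    also have "\<dots> = calpha C D X A \<cdot> (((one D \<box> g) \<box> one A) \<cdot> R)"
      by (rule assoc[symmetric]) (auto simp: g)
    finally have "calphai C D X A \<cdot> ((one D \<box> (g \<box> one A)) \<cdot> (calpha C D X A \<cdot> R)) =
       calphai C D X A \<cdot> (calpha C D X A \<cdot> (((one D \<box> g) \<box> one A) \<cdot> R))" by simp
    also have "\<dots> = (calphai C D X A \<cdot> calpha C D X A) \<cdot> (((one D \<box> g) \<box> one A) \<cdot> R)"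
      by (rule assoc) (auto simp: g)
    also have "\<dots> = ((one D \<box> g) \<box> one A) \<cdot> R"
      by (simp add: alpha_inv idl g)
    finally show ?thesis .
  qed
  define z where "z = (one D \<box> g) \<cdot> e'"
  have zt[simp]: "dm z = I" "cd z = T D X" by (auto simp: z_def g)
  have h2: "((one D \<box> g) \<box> one A) \<cdot> R = (z \<box> one A) \<cdot> clami C A"
  proof -
    have "((one D \<box> g) \<box> one A) \<cdot> R = (((one D \<box> g) \<box> one A) \<cdot> (e' \<box> one A)) \<cdot> clami C A"
      unfolding R_def by (rule assoc) (auto simp: g)
    also have "((one D \<box> g) \<box> one A) \<cdot> (e' \<box> one A) = ((one D \<box> g) \<cdot> e') \<box> (one A \<cdot> one A)"
      by (rule interchange[symmetric]) (auto simp: g)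
    also have "\<dots> = z \<box> one A" by (simp add: idl z_def)
    finally show ?thesis .
  qed
  have eD: "dm (ceps C X) = T D X" "cd (ceps C X) = I" by (auto simp: D_def)
  have sc: "ceps C X \<cdot> z = one I"
  proof -
    have "ceps C X \<cdot> z \<in> hom C I I" unfolding hom_def using eD by auto
    with scal show ?thesis by auto
  qed
  have h3: "(ceps C X \<box> one A) \<cdot> ((z \<box> one A) \<cdot> clami C A) = clami C A"
  proof -
    have "(ceps C X \<box> one A) \<cdot> ((z \<box> one A) \<cdot> clami C A) = ((ceps C X \<box> one A) \<cdot> (z \<box> one A)) \<cdot> clami C A"
      by (rule assoc) (auto simp: D_def)
    also have "(ceps C X \<box> one A) \<cdot> (z \<box> one A) = (ceps C X \<cdot> z) \<box> (one A \<cdot> one A)"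
      by (rule interchange[symmetric]) (auto simp: D_def)
    also have "\<dots> = one (T I A)" by (simp add: sc idl tens_id)
    finally show ?thesis by (simp add: idl)
  qed
  show ?thesis unfolding Kl_def
    using h1 h2 h3 by (simp add: D_def[symmetric] e'_def[symmetric] R_def[symmetric] lam_inv)
qed

lemma main:
  assumes dualN: "cdual C N = N" and tensN: "T N N = N"
    and scal: "hom C I I = {one I}"
  shows "frob_merge C N \<cdot> frob_split C N = one N \<and>
         (frob_split C N \<cdot> frob_merge C N = one N \<longleftrightarrow> is_unit_object_endo C N)"
proof -
  define u where "u = ceta C N"
  define v where "v = ceps C N"
  have ut[simp]: "dm u = I" "cd u = N" and vt[simp]: "dm v = N" "cd v = I"
    by (auto simp: u_def v_def dualN tensN)
  have vu: "v \<cdot> u = one I"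
  proof -
    have "v \<cdot> u \<in> hom C I I" by (simp add: hom_def)
    with scal show ?thesis by auto
  qed
  define e where "e = u \<cdot> v"
  have et[simp]: "dm e = N" "cd e = N" by (auto simp: e_def)
  define a where "a = (u \<box> one N) \<cdot> clami C N"
  define b where "b = clam C N \<cdot> (v \<box> one N)"
  have at[simp]: "dm a = N" "cd a = N" and bt[simp]: "dm b = N" "cd b = N"
    by (auto simp: a_def b_def tensN)
  have ba: "b \<cdot> a = one N" unfolding a_def b_def by (rule baL) (auto simp: vu)
  have conj: "a \<cdot> (f \<cdot> b) = e \<box> f" if "dm f = N" "cd f = N" for f
    unfolding a_def b_def e_def by (rule conjL) (auto simp: that)
  have ab: "a \<cdot> b = e \<box> one N" using conj[of "one N"] by (simp add: idl)
  define a' where "a' = (one N \<box> u) \<cdot> crhoi C N"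
  define b' where "b' = crho C N \<cdot> (one N \<box> v)"
  have a't[simp]: "dm a' = N" "cd a' = N" and b't[simp]: "dm b' = N" "cd b' = N"
    by (auto simp: a'_def b'_def tensN)
  have ba': "b' \<cdot> a' = one N" unfolding a'_def b'_def by (rule baR) (auto simp: vu)
  have conj': "a' \<cdot> (f \<cdot> b') = f \<box> e" if "dm f = N" "cd f = N" for f
    unfolding a'_def b'_def e_def by (rule conjR) (auto simp: that)
  have ab': "a' \<cdot> b' = one N \<box> e" using conj'[of "one N"] by (simp add: idl)
  have oneN: "one N \<box> one N = one N" using tens_id[of N N] tensN by simp
  have S: "frob_split C N = one N \<box> a"
    unfolding frob_split_def a_def dualN u_def
    by (subst interchange[symmetric]) (auto simp: idl)
  have M: "frob_merge C N = one N \<box> b"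
    unfolding frob_merge_def b_def dualN v_def
    by (subst interchange[symmetric]) (auto simp: idl)
  have MS: "frob_merge C N \<cdot> frob_split C N = one N"
    unfolding S M by (subst interchange[symmetric]) (auto simp: idl ba oneN)
  have SM: "frob_split C N \<cdot> frob_merge C N = one N \<box> (e \<box> one N)"
    unfolding S M by (subst interchange[symmetric]) (auto simp: idl ab)
  have eone: "e = one N" if h: "one N \<box> (e \<box> one N) = one N"
  proof -
    have "e \<box> one N = one N \<box> one N"
      by (rule left_cancel[OF scal, of N]) (auto simp: h oneN tensN)
    hence "e \<box> one N = one N \<box> one N" by simp
    thus ?thesis by (rule right_cancel[OF scal]) auto
  qed
  have "one N \<box> (e \<box> one N) = one N \<longleftrightarrow> is_unit_object_endo C N"
  proof
    assume h: "one N \<box> (e \<box> one N) = one N"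
    hence e1: "e = one N" by (rule eone)
    have abI: "a \<cdot> b = one N" using ab e1 oneN by simp
    have abI': "a' \<cdot> b' = one N" using ab' e1 oneN by simp
    have L: "bij_betw (\<lambda>f. one N \<box> f) (hom C N N) (hom C N N)"
      by (rule conj_bij[OF at bt ba abI]) (auto simp: hom_def conj e1)
    have R: "bij_betw (\<lambda>f. f \<box> one N) (hom C N N) (hom C N N)"
      by (rule conj_bij[OF a't b't ba' abI']) (auto simp: hom_def conj' e1)
    show "is_unit_object_endo C N" unfolding is_unit_object_endo_def using L R by simp
  next
    assume u: "is_unit_object_endo C N"
    have iL: "inj_on (\<lambda>f. one N \<box> f) (hom C N N)" and iR: "inj_on (\<lambda>f. f \<box> one N) (hom C N N)"
      using u unfolding is_unit_object_endo_def bij_betw_def by auto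
    have "surj_on": "(\<lambda>f. one N \<box> f) ` hom C N N = hom C N N"
      using u unfolding is_unit_object_endo_def bij_betw_def by auto
    have "e \<box> one N \<in> hom C N N" by (simp add: hom_def tensN)
    then obtain f where f: "f \<in> hom C N N" "one N \<box> f = e \<box> one N"
      using surj_on by (metis imageE)
    have ft: "dm f = N" "cd f = N" using f by (auto simp: hom_def)
    have "f = Kl N N N (one N \<box> f)" using Kl_cancel[OF scal, of N f] ft by simp
    also have "\<dots> = Kl N N N (e \<box> one N)" using f by simp
    also have "\<dots> = one N" by (rule Kl_scalar[OF scal]) auto
    finally have "e \<box> one N = one N" using f oneN by simp
    thus "one N \<box> (e \<box> one N) = one N" using oneN by simp
  qed
  thus ?thesis using MS SM by simp
qed

end

theorem mainTheorem10:
  fixes C :: "('o, 'm) cc" and N :: 'o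
  assumes cc: "is_compact_closed C"
    and refl: "ctens C (cdual C N) N = N"
    and dualN: "cdual C N = N"
    and tensN: "ctens C N N = N"
    and scalars: "hom C (cunit C) (cunit C) = {cid C (cunit C)}"
  shows "ccomp C (frob_merge C N) (frob_split C N) = cid C N \<and>
         (ccomp C (frob_split C N) (frob_merge C N) = cid C N
           \<longleftrightarrow> is_unit_object_endo C N)"
  using ccat.main[OF ccat.intro[OF cc] dualN tensN scalars] .

end
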